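(* For any temporal graph $\mathcal G=(V,E,\lambda)$ with lifetime $T_{\max}$ and any parameters $\delta,k\in\mathbb N^+$, the witness complexity of $\mathcal G$ is at most $|E|$.
   Context: A temporal graph $\mathcal G=(V,E,\lambda)$ with lifetime $T_{\max}$ consists of a finite undirected static graph $(V,E)$ and a labeling $\lambda:E\to\{1,\dots,T_{\max}\}$; edge $e$ is present only at time $\lambda(e)$. Infection model with parameter $\delta$: a set of at most $k$ seed infections $S\subseteq V\times[0,T_{\max}]$ is given; a seed $(u,t)$ makes $u$ infected at time $t$; otherwise a susceptible node $u$ becomes infected at time $t$ iff some neighbour $v$ infectious at time $t$ has $\lambda(uv)=t$ (exactly one infector recorded if several exist). A node infected at time $t$ is infectious at times $t+1,\dots,t+\delta$ and resistant afterwards. The infection log records triples $(u,v,t)$ ($u$ infected $v$ at time $t$). A witnessing schedule of length $a$ for $\mathcal G$ is a sequence $S_1,\dots,S_a$ of seed sets of size at most $k$ such that after performing these rounds all labels of $\mathcal G$ are uniquely determined (among labelings of the known static graph) by the infection logs; the witness complexity is the length of a shortest witnessing schedule. *)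

theory Defs
  imports Main
begin

definition valid_labeling :: "'v set set \<Rightarrow> nat \<Rightarrow> ('v set \<Rightarrow> nat) \<Rightarrow> bool" where
  "valid_labeling E Tmax lam \<longleftrightarrow> (\<forall>e\<in>E. lam e \<in> {1..Tmax})"

definition temporal_graph :: "'v set \<Rightarrow> 'v set set \<Rightarrow> nat \<Rightarrow> ('v set \<Rightarrow> nat) \<Rightarrow> bool" where
  "temporal_graph V E Tmax lam \<longleftrightarrow> finite V
     \<and> (\<forall>e\<in>E. \<exists>u v. e = {u, v} \<and> u \<noteq> v \<and> u \<in> V \<and> v \<in> V)
     \<and> valid_labeling E Tmax lam"

text \<open>inf_hist ... t v = Some s iff v got infected at time s \<le> t (by a seed, or by
  an infectious neighbour across an edge present at time s); None otherwise.
  A node infected at time s is infectious exactly at times s+1 .. s+delta.\<close>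

fun inf_hist :: "'v set set \<Rightarrow> ('v set \<Rightarrow> nat) \<Rightarrow> nat \<Rightarrow> ('v \<times> nat) set \<Rightarrow> nat \<Rightarrow> 'v \<Rightarrow> nat option" where
  "inf_hist E lam \<delta> S 0 = (\<lambda>v. if (v, 0) \<in> S then Some 0 else None)"
| "inf_hist E lam \<delta> S (Suc t) =
     (let h = inf_hist E lam \<delta> S t in
      (\<lambda>v. case h v of
              Some s \<Rightarrow> Some s
            | None \<Rightarrow>
               (if (v, Suc t) \<in> S \<or>
                   (\<exists>w s. {w, v} \<in> E \<and> lam {w, v} = Suc t \<and> h w = Some s
                          \<and> s < Suc t \<and> Suc t \<le> s + \<delta>)
                then Some (Suc t) else None)))"

definition inf_time :: "'v set set \<Rightarrow> ('v set \<Rightarrow> nat) \<Rightarrow> nat \<Rightarrow> nat \<Rightarrow> ('v \<times> nat) set \<Rightarrow> 'v \<Rightarrow> nat option" where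
  "inf_time E lam \<delta> Tmax S = inf_hist E lam \<delta> S Tmax"

definition is_log :: "'v set set \<Rightarrow> ('v set \<Rightarrow> nat) \<Rightarrow> nat \<Rightarrow> nat \<Rightarrow> ('v \<times> nat) set \<Rightarrow> ('v \<times> 'v \<times> nat) set \<Rightarrow> bool" where
  "is_log E lam \<delta> Tmax S L \<longleftrightarrow>
     (\<forall>(u, v, t) \<in> L. inf_time E lam \<delta> Tmax S v = Some t \<and> (v, t) \<notin> S
        \<and> {u, v} \<in> E \<and> lam {u, v} = t
        \<and> (\<exists>s. inf_time E lam \<delta> Tmax S u = Some s \<and> s < t \<and> t \<le> s + \<delta>))
   \<and> (\<forall>v t. inf_time E lam \<delta> Tmax S v = Some t \<and> (v, t) \<notin> S \<longrightarrow> (\<exists>!u. (u, v, t) \<in> L))"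

definition seed_set :: "'v set \<Rightarrow> nat \<Rightarrow> nat \<Rightarrow> ('v \<times> nat) set \<Rightarrow> bool" where
  "seed_set V Tmax k S \<longleftrightarrow> S \<subseteq> V \<times> {0..Tmax} \<and> finite S \<and> card S \<le> k"

text \<open>A schedule is witnessing if, whatever logs were observed in the rounds,
  every labeling of the known static graph (with the same lifetime) that could
  have produced these logs agrees with lam on all edges.\<close>

definition witnessing :: "'v set \<Rightarrow> 'v set set \<Rightarrow> nat \<Rightarrow> ('v set \<Rightarrow> nat) \<Rightarrow> nat \<Rightarrow> nat \<Rightarrow> ('v \<times> nat) set list \<Rightarrow> bool" where
  "witnessing V E Tmax lam \<delta> k Ss \<longleftrightarrow>
     (\<forall>S \<in> set Ss. seed_set V Tmax k S)
   \<and> (\<forall>Ls lam'. length Ls = length Ss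
        \<and> (\<forall>i < length Ss. is_log E lam \<delta> Tmax (Ss ! i) (Ls ! i))
        \<and> valid_labeling E Tmax lam'
        \<and> (\<forall>i < length Ss. is_log E lam' \<delta> Tmax (Ss ! i) (Ls ! i))
        \<longrightarrow> (\<forall>e \<in> E. lam' e = lam e))"

definition witness_complexity :: "'v set \<Rightarrow> 'v set set \<Rightarrow> nat \<Rightarrow> ('v set \<Rightarrow> nat) \<Rightarrow> nat \<Rightarrow> nat \<Rightarrow> nat" where
  "witness_complexity V E Tmax lam \<delta> k =
     (LEAST a. \<exists>Ss. length Ss = a \<and> witnessing V E Tmax lam \<delta> k Ss)"

end

theory Submission
  imports Defs
begin

lemma ih_le: "inf_hist E lam d S n v = Some s \<Longrightarrow> s \<le> n"
proof (induction n arbitrary: v s)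
  case 0 then show ?case by (simp split: if_splits)
next
  case (Suc n) then show ?case
    by (auto simp: Let_def split: option.splits if_splits) (meson le_SucI)+
qed

lemma ih_mono: "inf_hist E lam d S n v = Some s \<Longrightarrow> inf_hist E lam d S (n + m) v = Some s"
  by (induction m) (auto simp: Let_def)

lemma ih_lower: "inf_hist E lam d {(u,t0)} n w = Some s \<Longrightarrow> t0 < s \<or> (s = t0 \<and> w = u)"
proof (induction n arbitrary: w s)
  case 0 then show ?case by (simp split: if_splits)
next
  case (Suc n)
  show ?case
  proof (cases "inf_hist E lam d {(u,t0)} n w")
    case None
    with Suc.prems have "(w, Suc n) = (u,t0) \<or> (\<exists>x s'. inf_hist E lam d {(u,t0)} n x = Some s' \<and> s' < Suc n)"
      and "s = Suc n"
      by (auto simp: Let_def split: if_splits)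
    then show ?thesis using Suc.IH by fastforce
  next
    case (Some a)
    with Suc.prems have "inf_hist E lam d {(u,t0)} n w = Some s" by (simp add: Let_def)
    then show ?thesis using Suc.IH by blast
  qed
qed

lemma ih_seed0: "inf_hist E lam d {(u,t0)} t0 u = Some t0"
proof (cases t0)
  case 0 then show ?thesis by simp
next
  case (Suc m)
  have "inf_hist E lam d {(u,t0)} m u = None"
  proof (rule ccontr)
    assume "inf_hist E lam d {(u,t0)} m u \<noteq> None"
    then obtain s where s: "inf_hist E lam d {(u,t0)} m u = Some s" by auto
    from ih_le[OF s] ih_lower[OF s] Suc show False by auto
  qed
  then show ?thesis using Suc by (simp add: Let_def)
qed

lemma ih_edge:
  assumes "{u,v} \<in> E" "lam {u,v} = Suc t0" "u \<noteq> v" "d > 0"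
  shows "inf_hist E lam d {(u,t0)} (Suc t0) v = Some (Suc t0)"
proof -
  have "inf_hist E lam d {(u,t0)} t0 v = None"
  proof (rule ccontr)
    assume "inf_hist E lam d {(u,t0)} t0 v \<noteq> None"
    then obtain s where s: "inf_hist E lam d {(u,t0)} t0 v = Some s" by auto
    from ih_le[OF s] ih_lower[OF s] assms show False by auto
  qed
  moreover have "\<exists>w s. {w, v} \<in> E \<and> lam {w, v} = Suc t0 \<and> inf_hist E lam d {(u,t0)} t0 w = Some s
                          \<and> s < Suc t0 \<and> Suc t0 \<le> s + d"
    using assms ih_seed0[of E lam d u t0] by auto
  ultimately show ?thesis by (simp add: Let_def)
qed

lemma edge_key:
  assumes "{u,v} \<in> E" "lam {u,v} = Suc t0" "u \<noteq> v" "d > 0" "Suc t0 \<le> Tmax"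
    and L: "is_log E lam d Tmax {(u,t0)} L" and L': "is_log E lam' d Tmax {(u,t0)} L"
  shows "lam' {u,v} = lam {u,v}"
proof -
  have "inf_hist E lam d {(u,t0)} (Suc t0 + (Tmax - Suc t0)) v = Some (Suc t0)"
    by (rule ih_mono, rule ih_edge[where u=u and v=v], use assms in auto)
  hence it: "inf_time E lam d Tmax {(u,t0)} v = Some (Suc t0)"
    using assms(5) by (simp add: inf_time_def)
  have "(v, Suc t0) \<notin> {(u,t0)}" by simp
  with it L obtain w where w: "(w, v, Suc t0) \<in> L" unfolding is_log_def by blast
  with L obtain s where s: "inf_time E lam d Tmax {(u,t0)} w = Some s" "s < Suc t0"
    unfolding is_log_def by fastforce
  from ih_lower[OF s(1)[unfolded inf_time_def]] s(2) have "w = u" by auto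
  with w L' have "lam' {u,v} = Suc t0" unfolding is_log_def by fastforce
  with assms(2) show ?thesis by simp
qed

theorem mainTheorem12:
  fixes V :: "'v set" and E :: "'v set set" and lam :: "'v set \<Rightarrow> nat"
    and Tmax \<delta> k :: nat
  assumes "temporal_graph V E Tmax lam" and "\<delta> > 0" and "k > 0"
  shows "witness_complexity V E Tmax lam \<delta> k \<le> card E"
proof -
  have finV: "finite V" and edges: "\<forall>e\<in>E. \<exists>u v. e = {u, v} \<and> u \<noteq> v \<and> u \<in> V \<and> v \<in> V"
    and lab: "\<forall>e\<in>E. lam e \<in> {1..Tmax}"
    using assms(1) unfolding temporal_graph_def valid_labeling_def by auto
  have "E \<subseteq> Pow V" using edges by auto
  hence finE: "finite E" using finV by (meson finite_Pow_iff rev_finite_subset)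
  obtain xs where xs: "set xs = E" "distinct xs" using finite_distinct_list[OF finE] by blast
  define f where "f e = {((SOME u. u \<in> e), lam e - 1)}" for e :: "'v set"
  define Ss where "Ss = map f xs"
  have len: "length Ss = card E" unfolding Ss_def length_map using xs distinct_card by metis
  have fe: "\<exists>v. e = {(SOME u. u \<in> e), v} \<and> (SOME u. u \<in> e) \<noteq> v \<and> (SOME u. u \<in> e) \<in> V \<and> v \<in> V"
    if eE: "e \<in> E" for e
  proof -
    have "\<exists>u v. e = {u, v} \<and> u \<noteq> v \<and> u \<in> V \<and> v \<in> V" using edges eE by (rule bspec)
    then obtain a b where ab0: "e = {a,b} \<and> a \<noteq> b \<and> a \<in> V \<and> b \<in> V" by (elim exE) (rule that)
    hence ab: "e = {a,b}" "a \<noteq> b" "a \<in> V" "b \<in> V" by simp_all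
    define c where "c = (SOME u. u \<in> e)"
    have "a \<in> e" using ab by simp
    hence "c \<in> e" unfolding c_def by (rule someI)
    hence "c = a \<or> c = b" using ab(1) by blast
    hence "\<exists>v. e = {c, v} \<and> c \<noteq> v \<and> c \<in> V \<and> v \<in> V"
    proof
      assume "c = a" then show ?thesis using ab by blast
    next
      assume "c = b" then show ?thesis using ab by blast
    qed
    then show ?thesis unfolding c_def .
  qed
  have "witnessing V E Tmax lam \<delta> k Ss"
    unfolding witnessing_def
  proof (intro conjI allI impI ballI)
    fix S assume "S \<in> set Ss"
    then obtain e where e: "e \<in> E" "S = f e" using xs by (auto simp: Ss_def)
    then show "seed_set V Tmax k S" using fe[OF e(1)] lab assms(3)
      by (auto simp: seed_set_def f_def)
  next
    fix Ls lam' e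
    assume H: "length Ls = length Ss \<and>
       (\<forall>i<length Ss. is_log E lam \<delta> Tmax (Ss ! i) (Ls ! i)) \<and>
       valid_labeling E Tmax lam' \<and> (\<forall>i<length Ss. is_log E lam' \<delta> Tmax (Ss ! i) (Ls ! i))"
      and e: "e \<in> E"
    obtain i where i: "i < length xs" "xs ! i = e" using e xs by (metis in_set_conv_nth)
    have Si: "Ss ! i = f e" "i < length Ss" using i by (auto simp: Ss_def)
    obtain v where v: "e = {(SOME u. u \<in> e), v}" "(SOME u. u \<in> e) \<noteq> v" using fe[OF e] by blast
    have le: "lam e \<in> {1..Tmax}" using lab e by blast
    then obtain t0 where t0: "lam e = Suc t0" by (cases "lam e") auto
    have fe': "f e = {((SOME u. u \<in> e), t0)}" by (simp add: f_def t0)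
    have "lam' {(SOME u. u \<in> e), v} = lam {(SOME u. u \<in> e), v}"
    proof (rule edge_key[of "SOME u. u \<in> e" v E lam t0 \<delta> Tmax "Ls ! i" lam'])
      show "{SOME u. u \<in> e, v} \<in> E" using v e by simp
      show "lam {SOME u. u \<in> e, v} = Suc t0" using v t0 by simp
      show "(SOME u. u \<in> e) \<noteq> v" by (rule v(2))
      show "0 < \<delta>" by (rule assms(2))
      show "Suc t0 \<le> Tmax" using le t0 by simp
      show "is_log E lam \<delta> Tmax {(SOME u. u \<in> e, t0)} (Ls ! i)"
        using H Si fe' by metis
      show "is_log E lam' \<delta> Tmax {(SOME u. u \<in> e, t0)} (Ls ! i)"
        using H Si fe' by metis
    qed
    then show "lam' e = lam e" using v by simp
  qed
  then show ?thesis unfolding witness_complexity_def using len by (metis (mono_tags, lifting) Least_le)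
qed

end
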